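(* Let $P(T)=a_0T^N+a_1T^{N-1}+\cdots+a_N\in\mathbb{L}_p[T]$ with $a_0\neq0$ and $a_N\neq 0$, let $s=s^P_{\max}$ be the maximal slope of its Newton polygon, and let $c\in\bar{\mathbb{F}}_p$ be a root of the residue polynomial $\mathrm{Res}_P(T)$ with multiplicity $q$. Put $P_{[c]}(T)=P(T+[c]p^{s})$. Then: (1) $N-q$ is a breakpoint of $\mathrm{NP}(P_{[c]})$; (2) in the range $x\leq N-q$, the Newton polygons $\mathrm{NP}(P)$ and $\mathrm{NP}(P_{[c]})$ coincide; (3) the remaining slopes of $\mathrm{NP}(P_{[c]})$ (on $N-q\le x\le N$) are strictly greater than $s$.
   Context: $\mathbb{L}_p=W(\bar{\mathbb{F}}_p)((p^{\mathbb{Q}}))$ is the $p$-adic Mal'cev–Neumann field of formal sums $\alpha=\sum_{x\in\mathbb{Q}}[\alpha_x]p^x$ ($\alpha_x\in\bar{\mathbb{F}}_p$, $[\cdot]$ Teichmüller lift, well-ordered support), with valuation $v_p(\alpha)=\min$ of support and $C_x(\alpha)=\alpha_x$. The Newton polygon $\mathrm{NP}(P)$ is the lower boundary of the convex hull of the points $(k,v_p(a_k))$ for $a_k\neq 0$; its vertices are breakpoints; $m_{\max}$ is the largest breakpoint $<N$, $s^P_{\max}=\frac{v_p(a_N)-v_p(a_{m_{\max}})}{N-m_{\max}}$, and the residue polynomial is $\mathrm{Res}_P(T)=\sum_{k=0}^{N-m_{\max}}C_{v_p(a_{m_{\max}})+s^P_{\max}(N-m_{\max}-k)}(a_{N-k})\,T^k\in\bar{\mathbb{F}}_p[T]$.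 *)

theory Defs
  imports "HOL-Analysis.Analysis" "HOL-Computational_Algebra.Polynomial"
begin

definition supp_fun :: "(rat \<Rightarrow> 'k::zero) \<Rightarrow> rat set" where
  "supp_fun f = {x. f x \<noteq> 0}"

definition well_ordered_rat :: "rat set \<Rightarrow> bool" where
  "well_ordered_rat S \<longleftrightarrow> (\<forall>T. T \<subseteq> S \<and> T \<noteq> {} \<longrightarrow> (\<exists>m\<in>T. \<forall>y\<in>T. m \<le> y))"

text \<open>
  The field \<open>'a\<close> plays the role of L_p = W(Fpbar)((p^Q)), the type \<open>'k\<close> the role of Fpbar.
  \<open>teich\<close> is the Teichmueller lift [.], \<open>pw x\<close> is the formal element p^x,
  \<open>C a x\<close> is the coefficient C_x(a), \<open>v\<close> is the valuation v_p (only meaningful on nonzero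
  elements).\<close>

locale malcev_neumann =
  fixes p :: nat
    and v :: "'a::field_char_0 \<Rightarrow> rat"
    and teich :: "'k::field \<Rightarrow> 'a"
    and pw :: "rat \<Rightarrow> 'a"
    and C :: "'a \<Rightarrow> rat \<Rightarrow> 'k"
  assumes prime_p: "prime p"
    and char_k: "CHAR('k) = p"
    and k_alg_closed: "\<And>f :: 'k poly. degree f > 0 \<Longrightarrow> \<exists>x. poly f x = 0"
    and k_algebraic: "\<And>x :: 'k. \<exists>n>0. x ^ (p ^ n) = x"
    and teich_mult: "\<And>x y. teich (x * y) = teich x * teich y"
    and teich_0: "teich 0 = 0" and teich_1: "teich 1 = 1"
    and pw_add: "\<And>x y. pw (x + y) = pw x * pw y"
    and pw_1: "pw 1 = of_nat p"
    and C_wo: "\<And>a. well_ordered_rat (supp_fun (C a))"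
    and C_inj: "\<And>a b. C a = C b \<Longrightarrow> a = b"
    and C_surj: "\<And>f. well_ordered_rat (supp_fun f) \<Longrightarrow> \<exists>a. C a = f"
    and C_monom: "\<And>c x. C (teich c * pw x) = (\<lambda>y. if y = x then c else 0)"
    and C_add_disjoint: "\<And>a b. supp_fun (C a) \<inter> supp_fun (C b) = {} \<Longrightarrow>
                            C (a + b) = (\<lambda>x. C a x + C b x)"
    and C_add_lowest: "\<And>a b x. (\<forall>y<x. C a y = 0 \<and> C b y = 0) \<Longrightarrow>
                            C (a + b) x = C a x + C b x"
    and v_def: "\<And>a. a \<noteq> 0 \<Longrightarrow> C a (v a) \<noteq> 0 \<and> (\<forall>y < v a. C a y = 0)"
    and v_mult: "\<And>a b. a \<noteq> 0 \<Longrightarrow> b \<noteq> 0 \<Longrightarrow> v (a * b) = v a + v b"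
    and C_lead_mult: "\<And>a b. a \<noteq> 0 \<Longrightarrow> b \<noteq> 0 \<Longrightarrow>
                            C (a * b) (v a + v b) = C a (v a) * C b (v b)"
    and C_approx: "\<And>a b y. (\<forall>x<y. C a x = C b x) \<longleftrightarrow> (a = b \<or> y \<le> v (a - b))"

text \<open>Paper indexing: P(T) = a_0 T^N + ... + a_N, so a_k = coeff P (N - k), N = degree P.\<close>

definition pc :: "'a::zero poly \<Rightarrow> nat \<Rightarrow> 'a" where
  "pc P k = coeff P (degree P - k)"

definition np_points :: "('a::zero \<Rightarrow> rat) \<Rightarrow> 'a poly \<Rightarrow> (real \<times> real) set" where
  "np_points v P = {(real k, real_of_rat (v (pc P k))) | k. k \<le> degree P \<and> pc P k \<noteq> 0}"

text \<open>The Newton polygon as a function on [0,N]: the lower boundary of the convex hull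
  of the points; its value is \<open>\<infinity>\<close> above x-values not covered by the hull.\<close>

definition NP :: "('a::zero \<Rightarrow> rat) \<Rightarrow> 'a poly \<Rightarrow> real \<Rightarrow> ereal" where
  "NP v P x = Inf {ereal y | y. (x, y) \<in> convex hull (np_points v P)}"

definition breakpoint :: "('a::zero \<Rightarrow> rat) \<Rightarrow> 'a poly \<Rightarrow> real \<Rightarrow> bool" where
  "breakpoint v P x \<longleftrightarrow> 0 \<le> x \<and> x \<le> real (degree P) \<and> NP v P x \<noteq> \<infinity> \<and>
     \<not> (\<exists>x1 x2. 0 \<le> x1 \<and> x1 < x \<and> x < x2 \<and> x2 \<le> real (degree P) \<and>
            NP v P x1 \<noteq> \<infinity> \<and> NP v P x2 \<noteq> \<infinity> \<and>
            real_of_ereal (NP v P x) =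
              ((x2 - x) * real_of_ereal (NP v P x1) + (x - x1) * real_of_ereal (NP v P x2))
                / (x2 - x1))"

definition m_max :: "('a::zero \<Rightarrow> rat) \<Rightarrow> 'a poly \<Rightarrow> nat" where
  "m_max v P = (GREATEST m. m < degree P \<and> breakpoint v P (real m))"

definition s_max :: "('a::zero \<Rightarrow> rat) \<Rightarrow> 'a poly \<Rightarrow> rat" where
  "s_max v P = (v (pc P (degree P)) - v (pc P (m_max v P))) / of_nat (degree P - m_max v P)"

definition res_poly :: "('a::zero \<Rightarrow> rat) \<Rightarrow> ('a \<Rightarrow> rat \<Rightarrow> 'k::comm_ring_1) \<Rightarrow> 'a poly \<Rightarrow> 'k poly" where
  "res_poly v C P =
     (let N = degree P; m = m_max v P; s = s_max v P in
      (\<Sum>k\<le>N - m. monom (C (pc P (N - k)) (v (pc P m) + s * of_nat (N - m - k))) k))"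

end

theory Submission
  imports Defs
begin


lemma pcompose_power_left: "pcompose (p ^ n) q = (pcompose p q) ^ n"
  by (induction n) (simp_all add: pcompose_mult pcompose_1)

lemma coeff_lin_pow:
  fixes c :: "'a::comm_semiring_1"
  shows "coeff ([:c,1:]^n) l = of_nat (n choose l) * c^(n-l)"
proof (induction n arbitrary: l)
  case 0
  then show ?case by (cases l) auto
next
  case (Suc n)
  have e: "[:c,1:]^(Suc n) = smult c ([:c,1:]^n) + pCons 0 ([:c,1:]^n)"
    by simp
  show ?case
  proof (cases l)
    case 0
    then show ?thesis using Suc by (simp add: e)
  next
    case (Suc l')
    have "coeff ([:c,1:]^(Suc n)) l = c * (of_nat (n choose Suc l') * c^(n - Suc l'))
         + of_nat (n choose l') * c^(n-l')"
      using Suc.IH by (simp add: e Suc)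
    also have "\<dots> = of_nat (Suc n choose l) * c^(Suc n - l)"
    proof (cases "l' < n")
      case True
      then have "c * c^(n - Suc l') = c^(n-l')"
        by (metis Suc_diff_Suc power_Suc)
      then have "c * (of_nat (n choose Suc l') * c^(n - Suc l')) = of_nat (n choose Suc l') * c^(n-l')"
        by (metis mult.left_commute)
      then show ?thesis using True by (simp add: Suc algebra_simps)
    next
      case False
      then show ?thesis by (cases "l' = n") (auto simp: Suc binomial_eq_0)
    qed
    finally show ?thesis .
  qed
qed

lemma coeff_pcompose_shift:
  fixes p :: "'a::comm_semiring_1 poly"
  assumes "degree p \<le> n"
  shows "coeff (pcompose p [:c,1:]) l = (\<Sum>i\<le>n. coeff p i * of_nat (i choose l) * c^(i-l))"
proof -
  have "pcompose p [:c,1:] = pcompose (\<Sum>i\<le>n. monom (coeff p i) i) [:c,1:]"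
    using poly_as_sum_of_monoms'[OF assms] by simp
  also have "\<dots> = (\<Sum>i\<le>n. smult (coeff p i) ([:c,1:]^i))"
    by (simp add: pcompose_sum monom_altdef pcompose_smult pcompose_power_left pcompose_pCons)
  finally show ?thesis
    by (simp add: coeff_sum coeff_lin_pow mult_ac)
qed




definition nps :: "(real \<times> real) set \<Rightarrow> real \<Rightarrow> ereal" where
  "nps S x = Inf {ereal y | y. (x, y) \<in> convex hull S}"

lemma NP_nps: "NP v P x = nps (np_points v P) x"
  by (simp add: NP_def nps_def)

lemma nps_le: "(x, y) \<in> convex hull S \<Longrightarrow> nps S x \<le> ereal y"
  unfolding nps_def by (rule Inf_lower) auto

lemma nps_seg:
  assumes "(k1, w1) \<in> S" "(k2, w2) \<in> S" "0 \<le> u" "u \<le> 1"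
  shows "nps S (u * k1 + (1 - u) * k2) \<le> ereal (u * w1 + (1 - u) * w2)"
proof -
  have "u *\<^sub>R (k1, w1) + (1 - u) *\<^sub>R (k2, w2) \<in> convex hull S"
    using assms by (intro convexD[OF convex_convex_hull]) (auto intro: hull_inc)
  then show ?thesis by (intro nps_le) simp
qed

lemma convex_above_line: "convex {z :: real \<times> real. a + b * fst z \<le> snd z}"
  unfolding convex_def
proof (clarsimp)
  fix x1 y1 x2 y2 u v :: real
  assume h: "a + b * x1 \<le> y1" "a + b * x2 \<le> y2" "0 \<le> u" "0 \<le> v" "u + v = 1"
  have "a + b * (u * x1 + v * x2) = u * (a + b * x1) + v * (a + b * x2)"
    using h(5) by (simp add: algebra_simps) (metis add.commute distrib_right mult.commute mult_1)
  also have "\<dots> \<le> u * y1 + v * y2"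
    using h by (intro add_mono mult_left_mono) auto
  finally show "a + b * (u * x1 + v * x2) \<le> u * y1 + v * y2" .
qed

lemma hull_above_line:
  fixes a b x y :: real
  assumes "\<And>k w. (k, w) \<in> S \<Longrightarrow> a + b * k \<le> w" "(x, y) \<in> convex hull S"
  shows "a + b * x \<le> y"
proof -
  have "convex hull S \<subseteq> {z. a + b * fst z \<le> snd z}"
    apply (rule hull_minimal)
    using assms(1) by (auto simp: convex_above_line)
  then show ?thesis using assms(2) by auto
qed

lemma nps_ge_line:
  assumes "\<And>k w. (k, w) \<in> S \<Longrightarrow> a + b * k \<le> w"
  shows "ereal (a + b * x) \<le> nps S x"
  unfolding nps_def using hull_above_line[OF assms] by (auto intro!: Inf_greatest)

lemma nps_attained:
  assumes "finite S" "nps S x \<noteq> \<infinity>"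
  shows "\<exists>y. (x, y) \<in> convex hull S \<and> nps S x = ereal y"
proof -
  define F where "F = {y. (x, y) \<in> convex hull S}"
  have "F \<noteq> {}"
  proof
    assume "F = {}"
    then have "{ereal y | y. (x, y) \<in> convex hull S} = {}" by (auto simp: F_def)
    then show False using assms(2) by (simp add: nps_def top_ereal_def)
  qed
  have "compact (convex hull S)"
    using assms(1) by (intro compact_convex_hull finite_imp_compact)
  then have "compact (convex hull S \<inter> {z. fst z = x})"
    by (intro compact_Int_closed closed_Collect_eq) (auto intro: continuous_intros)
  then have "compact (snd ` (convex hull S \<inter> {z. fst z = x}))"
    by (intro compact_continuous_image) (auto intro: continuous_intros)
  moreover have "snd ` (convex hull S \<inter> {z. fst z = x}) = F"
    by (force simp: F_def image_iff)
  ultimately have "compact F" by simp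
  then obtain y0 where y0: "y0 \<in> F" "\<And>y. y \<in> F \<Longrightarrow> y0 \<le> y"
    using compact_attains_inf[OF _ \<open>F \<noteq> {}\<close>] by blast
  have "nps S x = ereal y0"
  proof (rule antisym)
    show "nps S x \<le> ereal y0" using y0(1) by (intro nps_le) (simp add: F_def)
    show "ereal y0 \<le> nps S x" unfolding nps_def using y0(2)
      by (auto intro!: Inf_greatest simp: F_def)
  qed
  then show ?thesis using y0(1) by (auto simp: F_def)
qed

lemma nps_strict:
  assumes fin: "finite S"
    and ge: "\<And>k w. (k, w) \<in> S \<Longrightarrow> a + b * k \<le> w"
    and gt: "\<And>k w. (k, w) \<in> S \<Longrightarrow> 0 < g * k + d \<Longrightarrow> a + b * k < w"
    and x: "0 < g * x + d"
  shows "ereal (a + b * x) < nps S x"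
proof -
  define D where "D = (\<lambda>(k, w). (w - (a + b * k)) / (g * k + d)) ` {z \<in> S. 0 < g * fst z + d}"
  define e where "e = Min (insert 1 D)"
  have finD: "finite D" using fin by (simp add: D_def)
  have e_pos: "0 < e"
    unfolding e_def using finD
    by (subst Min_gr_iff) (auto simp: D_def intro!: divide_pos_pos dest: gt)
  have e_le: "e \<le> (w - (a + b * k)) / (g * k + d)" if "(k, w) \<in> S" "0 < g * k + d" for k w
    unfolding e_def using finD that by (intro Min_le) (auto simp: D_def image_iff intro!: bexI[of _ "(k,w)"])
  have line: "(a + e * d) + (b + e * g) * k \<le> w" if "(k, w) \<in> S" for k w
  proof (cases "0 < g * k + d")
    case True
    then have "e * (g * k + d) \<le> w - (a + b * k)"
      using e_le[OF that True] by (simp add: pos_le_divide_eq)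
    then show ?thesis by (simp add: algebra_simps)
  next
    case False
    then have "e * (g * k + d) \<le> 0" using e_pos by (simp add: mult_nonneg_nonpos)
    then show ?thesis using ge[OF that] by (simp add: algebra_simps)
  qed
  have "0 < e * (g * x + d)" using e_pos x by simp
  then have "a + b * x < (a + e * d) + (b + e * g) * x"
    by (simp add: algebra_simps)
  also have "ereal \<dots> \<le> nps S x" by (rule nps_ge_line) (rule line)
  finally show ?thesis by simp
qed

lemma nps_mono:
  assumes "\<And>k w. (k, w) \<in> S' \<Longrightarrow> \<exists>y0\<le>w. (k, y0) \<in> convex hull S"
  shows "nps S x \<le> nps S' x"
proof -
  define E where "E = {z :: real \<times> real. \<exists>y0\<le>snd z. (fst z, y0) \<in> convex hull S}"
  have "convex E"
  proof (rule convexI)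
    fix z1 z2 :: "real \<times> real" and u v :: real
    assume z: "z1 \<in> E" "z2 \<in> E" and uv: "0 \<le> u" "0 \<le> v" "u + v = 1"
    obtain x1 y1 x2 y2 where zz: "z1 = (x1, y1)" "z2 = (x2, y2)" by fastforce
    obtain y01 y02 where yy: "y01 \<le> y1" "(x1, y01) \<in> convex hull S"
      "y02 \<le> y2" "(x2, y02) \<in> convex hull S" using z zz by (auto simp: E_def)
    note h = uv yy
    have "u *\<^sub>R (x1, y01) + v *\<^sub>R (x2, y02) \<in> convex hull S"
      using h by (intro convexD[OF convex_convex_hull]) auto
    moreover have "u * y01 + v * y02 \<le> u * y1 + v * y2"
      using h by (intro add_mono mult_left_mono) auto
    ultimately show "u *\<^sub>R z1 + v *\<^sub>R z2 \<in> E"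
      by (auto simp: E_def zz)
  qed
  have "convex hull S' \<subseteq> E"
    using assms by (intro hull_minimal \<open>convex E\<close>) (auto simp: E_def)
  show ?thesis
    unfolding nps_def[of S']
  proof (rule Inf_greatest, clarsimp)
    fix y assume "(x, y) \<in> convex hull S'"
    then obtain y0 where "y0 \<le> y" "(x, y0) \<in> convex hull S"
      using \<open>convex hull S' \<subseteq> E\<close> by (auto simp: E_def)
    then show "nps S x \<le> ereal y" using nps_le[of x y0 S] by (meson ereal_less_eq(3) order_trans)
  qed
qed

lemma seg_E:
  fixes k0 w0 R wR j w s :: real
  assumes "(k0, w0) \<in> T" "(R, wR) \<in> T" "k0 \<le> j" "j \<le> R"
    "wR \<le> w0 + s * (R - k0)" "w0 + s * (j - k0) \<le> w"
  shows "\<exists>y0\<le>w. (j, y0) \<in> convex hull T"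
proof (cases "k0 = R")
  case True
  then have "j = k0" using assms(3,4) by linarith
  then show ?thesis using assms True by (intro exI[of _ w0]) (auto intro: hull_inc)
next
  case False
  then have pos: "0 < R - k0" using assms by auto
  define u where "u = (R - j) / (R - k0)"
  have u: "0 \<le> u" "u \<le> 1" using assms pos by (auto simp: u_def field_simps)
  have "u *\<^sub>R (k0, w0) + (1 - u) *\<^sub>R (R, wR) \<in> convex hull T"
    using assms u by (intro convexD[OF convex_convex_hull]) (auto intro: hull_inc)
  moreover have "u * k0 + (1 - u) * R = j"
  proof -
    have "1 - u = (j - k0) / (R - k0)" using pos by (simp add: u_def field_simps)
    then have "u * k0 + (1 - u) * R = ((R - j) * k0 + (j - k0) * R) / (R - k0)"
      by (simp add: u_def add_divide_distrib)
    also have "(R - j) * k0 + (j - k0) * R = j * (R - k0)" by (simp add: algebra_simps)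
    finally show ?thesis using pos by simp
  qed
  moreover have "u * w0 + (1 - u) * wR \<le> w"
  proof -
    have "(1 - u) * wR \<le> (1 - u) * (w0 + s * (R - k0))"
      using u assms by (intro mult_left_mono) auto
    moreover have "u * w0 + (1 - u) * (w0 + s * (R - k0)) = w0 + s * (j - k0)"
    proof -
      have e1: "1 - u = (j - k0) / (R - k0)" using pos by (simp add: u_def field_simps)
      have "u * w0 + (1 - u) * (w0 + s * (R - k0)) = w0 + s * ((1 - u) * (R - k0))"
        by (simp add: algebra_simps)
      also have "(1 - u) * (R - k0) = j - k0" using pos by (simp add: e1)
      finally show ?thesis .
    qed
    ultimately show ?thesis using assms by linarith
  qed
  ultimately show ?thesis by (intro exI[of _ "u * w0 + (1 - u) * wR"]) auto
qed

lemma nps_drop_right: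
  fixes a b x0 R x :: real
  assumes fin: "finite T" and p0: "(x0, a + b * x0) \<in> T"
    and ge: "\<And>k w. (k, w) \<in> T \<Longrightarrow> a + b * k \<le> w"
    and xR: "x0 < R" and xx: "x \<le> x0"
  shows "nps (insert (R, a + b * R) T) x = nps T x"
proof (rule antisym)
  show "nps (insert (R, a + b * R) T) x \<le> nps T x"
    by (rule nps_mono) (auto intro: hull_inc)
  show "nps T x \<le> nps (insert (R, a + b * R) T) x"
  proof (cases "nps (insert (R, a + b * R) T) x = \<infinity>")
    case True then show ?thesis by simp
  next
    case False
    then obtain y where y: "(x, y) \<in> convex hull (insert (R, a + b * R) T)"
      "nps (insert (R, a + b * R) T) x = ereal y"
      using nps_attained[of "insert (R, a + b * R) T" x] fin by auto
    have "T \<noteq> {}" using p0 by auto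
    then obtain u v B where uvB: "0 \<le> u" "0 \<le> v" "u + v = 1" "B \<in> convex hull T"
      "(x, y) = u *\<^sub>R (R, a + b * R) + v *\<^sub>R B"
      using y(1) unfolding convex_hull_insert[OF \<open>T \<noteq> {}\<close>] by blast
    obtain bx by' where B: "B = (bx, by')" by fastforce
    have xe: "x = u * R + v * bx" and ye: "y = u * (a + b * R) + v * by'"
      using uvB(5) B by auto
    have byge: "a + b * bx \<le> by'"
      using hull_above_line[of T a b bx by'] ge uvB(4) B by auto
    show ?thesis
    proof (cases "u = 0")
      case True
      then have "(x, y) = B" using uvB by (simp add: zero_prod_def)
      then show ?thesis using y(2) uvB(4) nps_le[of x y T] by simp
    next
      case False
      then have u0: "0 < u" using uvB by simp
      have v0: "0 < v"
      proof (rule ccontr)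
        assume "\<not> 0 < v"
        then have "v = 0" using uvB by simp
        then have "x = R" using xe uvB by simp
        then show False using xR xx by simp
      qed
      have "v * bx < v * x"
      proof -
        have "u * x < u * R" using u0 xR xx by simp
        moreover have "v * bx = x - u * R" using xe by simp
        moreover have "v * x = x - u * x" using uvB(3) by (metis add_diff_cancel_left' left_diff_distrib' mult_1)
        ultimately show ?thesis by linarith
      qed
      then have bxx: "bx < x" using v0 by simp
      define mu where "mu = (x0 - x) / (x0 - bx)"
      have mu: "0 \<le> mu" "mu \<le> 1" using bxx xx by (auto simp: mu_def field_simps)
      have "mu *\<^sub>R B + (1 - mu) *\<^sub>R (x0, a + b * x0) \<in> convex hull T"
        using mu uvB(4) p0 by (intro convexD[OF convex_convex_hull]) (auto intro: hull_inc)
      moreover have "mu * bx + (1 - mu) * x0 = x"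
      proof -
        have "mu * (x0 - bx) = x0 - x" using bxx xx by (simp add: mu_def)
        then show ?thesis by (simp add: algebra_simps)
      qed
      moreover have "mu * by' + (1 - mu) * (a + b * x0) \<le> y"
      proof -
        define d where "d = by' - (a + b * bx)"
        have d0: "0 \<le> d" using byge by (simp add: d_def)
        have "R * u + R * v = R" using uvB(3) by (metis distrib_left mult.right_neutral)
        then have vR: "v * (R - bx) = R - x" using xe by (simp add: algebra_simps)
        have "mu \<le> v"
        proof -
          have "v * (R - x0) \<le> R - x0" using uvB xR by (simp add: mult_left_le_one_le)
          then have "x0 - x \<le> v * (x0 - bx)" using vR by (simp add: algebra_simps)
          then show ?thesis using bxx xx by (simp add: mu_def pos_divide_le_eq)
        qed
        then have "mu * d \<le> v * d" using d0 by (simp add: mult_right_mono)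
        have e1: "mu * by' + (1 - mu) * (a + b * x0) = a + b * (mu * bx + (1 - mu) * x0) + mu * d"
          by (simp add: d_def algebra_simps)
        have e2: "y = a + b * (u * R + v * bx) + v * d"
        proof -
          have "a * u + a * v = a" using uvB(3) by (metis distrib_left mult.right_neutral)
          then show ?thesis using ye by (simp add: d_def algebra_simps)
        qed
        show ?thesis using e1 e2 \<open>mu * d \<le> v * d\<close> \<open>mu * bx + (1 - mu) * x0 = x\<close> xe
          by simp
      qed
      ultimately have "(x, mu * by' + (1 - mu) * (a + b * x0)) \<in> convex hull T"
        using B by simp
      then have "nps T x \<le> ereal (mu * by' + (1 - mu) * (a + b * x0))"
        by (rule nps_le)
      also have "\<dots> \<le> ereal y" using \<open>mu * by' + (1 - mu) * (a + b * x0) \<le> y\<close> by simp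
      finally show ?thesis using y(2) by simp
    qed
  qed
qed

lemma nps_on_line:
  fixes a b k1 k2 x :: real
  assumes "(k1, a + b * k1) \<in> S" "(k2, a + b * k2) \<in> S" "k1 \<le> x" "x \<le> k2"
    and ge: "\<And>k w. (k, w) \<in> S \<Longrightarrow> a + b * k \<le> w"
  shows "nps S x = ereal (a + b * x)"
proof (rule antisym)
  show "ereal (a + b * x) \<le> nps S x" by (rule nps_ge_line) (rule ge)
  show "nps S x \<le> ereal (a + b * x)"
  proof (cases "k1 = k2")
    case True
    then have "x = k1" using assms by auto
    then show ?thesis using assms(1) by (intro nps_le) (auto intro: hull_inc)
  next
    case False
    then have pos: "0 < k2 - k1" using assms by auto
    define u where "u = (k2 - x) / (k2 - k1)"
    have u: "0 \<le> u" "u \<le> 1" using assms pos by (auto simp: u_def field_simps)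
    have e1: "1 - u = (x - k1) / (k2 - k1)" using pos by (simp add: u_def field_simps)
    have ux: "u * k1 + (1 - u) * k2 = x"
    proof -
      have "u * k1 + (1 - u) * k2 = ((k2 - x) * k1 + (x - k1) * k2) / (k2 - k1)"
        using e1 by (simp add: u_def add_divide_distrib)
      also have "(k2 - x) * k1 + (x - k1) * k2 = x * (k2 - k1)" by (simp add: algebra_simps)
      finally show ?thesis using pos by simp
    qed
    have "u * (a + b * k1) + (1 - u) * (a + b * k2) = a + b * (u * k1 + (1 - u) * k2)"
      by (simp add: algebra_simps)
    then show ?thesis using nps_seg[OF assms(1,2) u] ux by simp
  qed
qed

lemma ereal_fin_ge:
  assumes "e \<noteq> \<infinity>" "ereal c \<le> e"
  shows "e = ereal (real_of_ereal e) \<and> c \<le> real_of_ereal e"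
  using assms by (cases e) auto

lemma ereal_fin_gt:
  assumes "e \<noteq> \<infinity>" "ereal c < e"
  shows "e = ereal (real_of_ereal e) \<and> c < real_of_ereal e"
  using assms by (cases e) auto

lemma interp_gt:
  fixes a b x1 x x2 r1 r2 :: real
  assumes "x1 < x" "x < x2" "a + b * x1 \<le> r1" "a + b * x2 \<le> r2"
    "a + b * x1 < r1 \<or> a + b * x2 < r2"
  shows "a + b * x < ((x2 - x) * r1 + (x - x1) * r2) / (x2 - x1)"
proof -
  have p1: "0 < x2 - x" and p2: "0 < x - x1" and p3: "0 < x2 - x1" using assms by auto
  have "(x2 - x) * (a + b * x1) + (x - x1) * (a + b * x2) < (x2 - x) * r1 + (x - x1) * r2"
  proof (cases "a + b * x1 < r1")
    case True
    then have "(x2 - x) * (a + b * x1) < (x2 - x) * r1" using p1 by simp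
    moreover have "(x - x1) * (a + b * x2) \<le> (x - x1) * r2" using p2 assms(4) by simp
    ultimately show ?thesis by linarith
  next
    case False
    then have "a + b * x2 < r2" using assms(5) by simp
    then have "(x - x1) * (a + b * x2) < (x - x1) * r2" using p2 by simp
    moreover have "(x2 - x) * (a + b * x1) \<le> (x2 - x) * r1" using p1 assms(3) by simp
    ultimately show ?thesis by linarith
  qed
  moreover have "(x2 - x) * (a + b * x1) + (x - x1) * (a + b * x2) = (a + b * x) * (x2 - x1)"
    by (simp add: algebra_simps)
  ultimately show ?thesis using p3 by (simp add: pos_less_divide_eq)
qed

lemma finite_min_least:
  fixes f :: "nat \<Rightarrow> 'b::linorder"
  assumes "finite K" "K \<noteq> {}"
  shows "\<exists>k\<in>K. (\<forall>k'\<in>K. f k \<le> f k') \<and> (\<forall>k'\<in>K. k' < k \<longrightarrow> f k < f k')"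
proof -
  define M where "M = Min (f ` K)"
  have M: "M \<in> f ` K" "\<And>k. k \<in> K \<Longrightarrow> M \<le> f k"
    using assms by (auto simp: M_def)
  define K' where "K' = {k \<in> K. f k = M}"
  have "K' \<noteq> {}" "finite K'" using M(1) assms(1) by (auto simp: K'_def)
  define k where "k = Min K'"
  have k: "k \<in> K'" "\<And>k'. k' \<in> K' \<Longrightarrow> k \<le> k'"
    using \<open>K' \<noteq> {}\<close> \<open>finite K'\<close> by (auto simp: k_def)
  show ?thesis
  proof (intro bexI[of _ k] conjI ballI impI)
    show "k \<in> K" using k by (auto simp: K'_def)
    show "f k \<le> f k'" if "k' \<in> K" for k' using k(1) M(2)[OF that] by (auto simp: K'_def)
    show "f k < f k'" if "k' \<in> K" "k' < k" for k'
    proof -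
      have "k' \<notin> K'" using k(2) that(2) by force
      then have "f k' \<noteq> M" using that(1) by (auto simp: K'_def)
      then show ?thesis using k(1) M(2)[OF that(1)] by (auto simp: K'_def)
    qed
  qed
qed




context malcev_neumann begin

definition lev :: "rat \<Rightarrow> 'a \<Rightarrow> bool" where
  "lev y a \<longleftrightarrow> (\<forall>x<y. C a x = 0)"

lemma C_zero: "C 0 = (\<lambda>_. 0)"
  using C_monom[of 0 0] by (simp add: teich_0)

lemma pw_0: "pw 0 = 1"
proof -
  have "pw 1 = pw 0 * pw 1" using pw_add[of 0 1] by simp
  moreover have "pw 1 \<noteq> 0" using pw_1 prime_p by (simp add: prime_gt_0_nat)
  ultimately show ?thesis by simp
qed

lemma C_one: "C 1 = (\<lambda>y. if y = 0 then 1 else 0)"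
  using C_monom[of 1 0] by (simp add: teich_1 pw_0)

lemma lev_zero: "lev y 0"
  by (simp add: lev_def C_zero)

lemma lev_le_v: "a \<noteq> 0 \<Longrightarrow> lev y a \<Longrightarrow> y \<le> v a"
  using v_def[of a] unfolding lev_def by (meson not_le)

lemma lev_v: "a \<noteq> 0 \<Longrightarrow> lev (v a) a"
  using v_def[of a] unfolding lev_def by blast

lemma lev_mono: "lev y a \<Longrightarrow> y' \<le> y \<Longrightarrow> lev y' a"
  unfolding lev_def by auto

lemma lev_gt_C: "lev y a \<Longrightarrow> y' < y \<Longrightarrow> C a y' = 0"
  unfolding lev_def by auto

lemma lev_add: "lev y a \<Longrightarrow> lev y b \<Longrightarrow> lev y (a + b) \<and> C (a + b) y = C a y + C b y"
proof -
  assume a: "lev y a" and b: "lev y b"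
  have "C (a + b) x = C a x + C b x" if "x \<le> y" for x
    using that a b by (intro C_add_lowest) (auto simp: lev_def)
  then show ?thesis using a b by (auto simp: lev_def)
qed

lemma lev_sum:
  "finite F \<Longrightarrow> (\<And>i. i \<in> F \<Longrightarrow> lev y (f i)) \<Longrightarrow>
     lev y (sum f F) \<and> C (sum f F) y = (\<Sum>i\<in>F. C (f i) y)"
proof (induction F rule: finite_induct)
  case empty
  then show ?case by (simp add: lev_zero C_zero)
next
  case (insert i F)
  then have "lev y (sum f F)" "C (sum f F) y = (\<Sum>i\<in>F. C (f i) y)" "lev y (f i)" by auto
  then show ?case using insert(1,2) lev_add[of y "f i" "sum f F"] by simp
qed

lemma lev_v_eq: "lev y a \<Longrightarrow> C a y \<noteq> 0 \<Longrightarrow> a \<noteq> 0 \<and> v a = y"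
proof -
  assume l: "lev y a" and c: "C a y \<noteq> 0"
  have a0: "a \<noteq> 0" using c by (auto simp: C_zero)
  have "y \<le> v a" using lev_le_v[OF a0 l] .
  moreover have "\<not> y < v a" using v_def[OF a0] c by auto
  ultimately show ?thesis using a0 by simp
qed

lemma lev_gt: "lev y a \<Longrightarrow> a \<noteq> 0 \<Longrightarrow> C a y = 0 \<Longrightarrow> y < v a"
  using lev_le_v[of a y] v_def[of a] by (metis order_le_less)

lemma lev_mult:
  assumes a: "lev y a" and b: "lev z b"
  shows "lev (y + z) (a * b) \<and> C (a * b) (y + z) = C a y * C b z"
proof (cases "a = 0 \<or> b = 0")
  case True
  then show ?thesis
    using a b by (auto simp: lev_zero C_zero)
next
  case False
  then have a0: "a \<noteq> 0" and b0: "b \<noteq> 0" by auto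
  have ya: "y \<le> v a" and zb: "z \<le> v b" using lev_le_v a b a0 b0 by auto
  have vab: "v (a * b) = v a + v b" using v_mult[OF a0 b0] .
  have ab0: "a * b \<noteq> 0" using a0 b0 by simp
  have lab: "lev (y + z) (a * b)"
    using lev_mono[OF lev_v[OF ab0]] vab ya zb by simp
  show ?thesis
  proof (cases "v a = y \<and> v b = z")
    case True
    then show ?thesis using lab C_lead_mult[OF a0 b0] by simp
  next
    case False
    then have "y + z < v (a * b)" using vab ya zb by auto
    then have "C (a * b) (y + z) = 0" using v_def[OF ab0] by auto
    moreover have "C a y = 0 \<or> C b z = 0"
      using False ya zb v_def[OF a0] v_def[OF b0] by (auto simp: order_le_less)
    ultimately show ?thesis using lab by auto
  qed
qed

lemma lev_nat: "lev 0 (of_nat n) \<and> C (of_nat n) 0 = of_nat n"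
proof (induction n)
  case 0
  then show ?case by (simp add: lev_zero C_zero)
next
  case (Suc n)
  have l1: "lev 0 1" by (simp add: lev_def C_one)
  show ?case using lev_add[OF l1 conjunct1[OF Suc]] Suc by (simp add: C_one add.commute)
qed

lemma teich_pow: "teich (c ^ n) = teich c ^ n"
  by (induction n) (simp_all add: teich_1 teich_mult)

lemma pw_nat_mult: "pw (of_nat n * s) = pw s ^ n"
proof (induction n)
  case 0
  then show ?case by (simp add: pw_0)
next
  case (Suc n)
  have "pw (of_nat (Suc n) * s) = pw (s + of_nat n * s)" by (simp add: algebra_simps)
  then show ?case using Suc by (simp add: pw_add)
qed

lemma lev_tpow:
  "lev (of_nat e * s) ((teich c * pw s) ^ e) \<and> C ((teich c * pw s) ^ e) (of_nat e * s) = c ^ e"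
proof -
  have "(teich c * pw s) ^ e = teich (c ^ e) * pw (of_nat e * s)"
    by (simp add: teich_pow pw_nat_mult power_mult_distrib)
  then show ?thesis by (simp add: C_monom lev_def)
qed

end



lemma last_segment:
  fixes v :: "'a::zero \<Rightarrow> rat" and P :: "'a poly"
  assumes deg: "degree P > 0" and a0: "pc P 0 \<noteq> 0" and aN: "pc P (degree P) \<noteq> 0"
  shows "m_max v P < degree P \<and> pc P (m_max v P) \<noteq> 0 \<and>
    (\<forall>k\<le>degree P. pc P k \<noteq> 0 \<longrightarrow>
        v (pc P (degree P)) + s_max v P * (of_nat k - of_nat (degree P)) \<le> v (pc P k)) \<and>
    (\<forall>k<m_max v P. pc P k \<noteq> 0 \<longrightarrow>
        v (pc P (degree P)) + s_max v P * (of_nat k - of_nat (degree P)) < v (pc P k)) \<and>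
    v (pc P (degree P)) + s_max v P * (of_nat (m_max v P) - of_nat (degree P)) = v (pc P (m_max v P))"
proof -
  define N where "N = degree P"
  define a where "a k = pc P k" for k
  define w where "w k = v (a k)" for k
  define K where "K = {k. k < N \<and> a k \<noteq> 0}"
  define sl where "sl k = (w N - w k) / (of_nat N - of_nat k)" for k :: nat
  have finK: "finite K" by (simp add: K_def)
  have K0: "0 \<in> K" using deg a0 by (simp add: K_def N_def a_def)
  define sg where "sg = Max (sl ` K)"
  have slle: "sl k \<le> sg" if "k \<in> K" for k using finK that by (simp add: sg_def)
  have sgin: "sg \<in> sl ` K" using finK K0 by (auto simp: sg_def intro!: Max_in)
  define M where "M = {k \<in> K. sl k = sg}"
  have finM: "finite M" "M \<noteq> {}" using finK sgin by (auto simp: M_def)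
  define m where "m = Min M"
  have mM: "m \<in> M" and mle: "\<And>k. k \<in> M \<Longrightarrow> m \<le> k"
    using finM by (auto simp: m_def)
  have mN: "m < N" and am: "a m \<noteq> 0" and slm: "sl m = sg" using mM by (auto simp: M_def K_def)
  define Lq where "Lq k = w N + sg * (of_nat k - of_nat N)" for k :: nat
  have geq: "Lq k \<le> w k" if "k \<le> N" "a k \<noteq> 0" for k
  proof (cases "k = N")
    case True then show ?thesis by (simp add: Lq_def)
  next
    case False
    then have kK: "k \<in> K" and pos: "(0::rat) < of_nat N - of_nat k" using that by (auto simp: K_def)
    have "(w N - w k) / (of_nat N - of_nat k) \<le> sg" using slle[OF kK] by (simp add: sl_def)
    then have "w N - w k \<le> sg * (of_nat N - of_nat k)" using pos by (simp add: pos_divide_le_eq mult.commute)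
    then show ?thesis by (simp add: Lq_def algebra_simps)
  qed
  have gt: "Lq k < w k" if "k < m" "a k \<noteq> 0" for k
  proof -
    have kK: "k \<in> K" using that mN by (auto simp: K_def)
    have pos: "(0::rat) < of_nat N - of_nat k" using that mN by auto
    have "sl k \<noteq> sg" using mle[of k] that kK by (auto simp: M_def)
    then have "(w N - w k) / (of_nat N - of_nat k) < sg" using slle[OF kK] by (simp add: sl_def)
    then have "w N - w k < sg * (of_nat N - of_nat k)" using pos by (simp add: pos_divide_less_eq mult.commute)
    then show ?thesis by (simp add: Lq_def algebra_simps)
  qed
  have eqm: "Lq m = w m"
  proof -
    have pos: "(0::rat) < of_nat N - of_nat m" using mN by auto
    have "(w N - w m) / (of_nat N - of_nat m) = sg" using slm by (simp add: sl_def)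
    then have "w N - w m = sg * (of_nat N - of_nat m)" using pos by (simp add: divide_eq_eq mult.commute)
    then show ?thesis by (simp add: Lq_def algebra_simps)
  qed
  define S where "S = np_points v P"
  define al where "al = real_of_rat (w N) - real_of_rat sg * real N"
  define be where "be = real_of_rat sg"
  have S_eq: "S = {(real k, real_of_rat (w k)) | k. k \<le> N \<and> a k \<noteq> 0}"
    by (simp add: S_def np_points_def N_def a_def w_def)
  have finS: "finite S" unfolding S_eq by (rule finite_image_set) simp
  have lineq: "al + be * real k = real_of_rat (Lq k)" for k
    by (simp add: al_def be_def Lq_def of_rat_add of_rat_mult of_rat_diff algebra_simps)
  have ge: "al + be * x \<le> y" if "(x, y) \<in> S" for x y
    using that geq by (auto simp: S_eq lineq of_rat_less_eq)
  have ptm: "(real m, al + be * real m) \<in> S"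
    using mN am eqm by (auto simp: S_eq lineq)
  have ptN: "(real N, al + be * real N) \<in> S"
    using aN by (auto simp: S_eq lineq Lq_def N_def a_def)
  have NPline: "NP v P x = ereal (al + be * x)" if "real m \<le> x" "x \<le> real N" for x
    unfolding NP_nps S_def[symmetric] using that by (intro nps_on_line[OF ptm ptN _ _ ge]) auto
  have bm: "breakpoint v P (real m)"
    unfolding breakpoint_def N_def[symmetric]
  proof (intro conjI)
    show "0 \<le> real m" by simp
    show "real m \<le> real N" using mN by simp
    show "NP v P (real m) \<noteq> \<infinity>" using NPline[of "real m"] mN by simp
  next
    show "\<not> (\<exists>x1 x2. 0 \<le> x1 \<and> x1 < real m \<and> real m < x2 \<and> x2 \<le> real N \<and>
            NP v P x1 \<noteq> \<infinity> \<and> NP v P x2 \<noteq> \<infinity> \<and>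
            real_of_ereal (NP v P (real m)) =
              ((x2 - real m) * real_of_ereal (NP v P x1) + (real m - x1) * real_of_ereal (NP v P x2))
                / (x2 - x1))"
    proof
    assume "\<exists>x1 x2. 0 \<le> x1 \<and> x1 < real m \<and> real m < x2 \<and> x2 \<le> real N \<and>
            NP v P x1 \<noteq> \<infinity> \<and> NP v P x2 \<noteq> \<infinity> \<and>
            real_of_ereal (NP v P (real m)) =
              ((x2 - real m) * real_of_ereal (NP v P x1) + (real m - x1) * real_of_ereal (NP v P x2))
                / (x2 - x1)"
    then obtain x1 x2 where x: "x1 < real m" "real m < x2" "NP v P x1 \<noteq> \<infinity>" "NP v P x2 \<noteq> \<infinity>"
      "real_of_ereal (NP v P (real m)) =
              ((x2 - real m) * real_of_ereal (NP v P x1) + (real m - x1) * real_of_ereal (NP v P x2))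
                / (x2 - x1)" by blast
    have "ereal (al + be * x1) < NP v P x1"
      unfolding NP_nps S_def[symmetric]
    proof (rule nps_strict[OF finS ge, of "-1" "real m"])
      fix k y assume "(k, y) \<in> S" "0 < -1 * k + real m"
      then obtain j where "k = real j" "y = real_of_rat (w j)" "j < m" "a j \<noteq> 0"
        by (auto simp: S_eq)
      then show "al + be * k < y" using gt by (simp add: lineq of_rat_less)
    next
      show "0 < -1 * x1 + real m" using x(1) by simp
    qed
    then have r1: "al + be * x1 < real_of_ereal (NP v P x1)" using ereal_fin_gt x(3) by blast
    have "ereal (al + be * x2) \<le> NP v P x2"
      unfolding NP_nps S_def[symmetric] by (rule nps_ge_line) (rule ge)
    then have r2: "al + be * x2 \<le> real_of_ereal (NP v P x2)" using ereal_fin_ge x(4) by blast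
    have "al + be * real m < ((x2 - real m) * real_of_ereal (NP v P x1) + (real m - x1) * real_of_ereal (NP v P x2))
                / (x2 - x1)"
      using interp_gt[OF x(1,2) less_imp_le[OF r1] r2] r1 by blast
    moreover have "real_of_ereal (NP v P (real m)) = al + be * real m" using NPline[of "real m"] mN by simp
    ultimately show False using x(5) by simp
    qed
  qed
  have nb: "\<not> breakpoint v P (real j)" if "m < j" "j < N" for j
  proof
    assume bj: "breakpoint v P (real j)"
    have e1: "NP v P (real m) = ereal (al + be * real m)" using NPline[of "real m"] mN by simp
    have e2: "NP v P (real N) = ereal (al + be * real N)" using NPline[of "real N"] mN by simp
    have e3: "NP v P (real j) = ereal (al + be * real j)" using NPline[of "real j"] that by simp
    have pos: "0 < real N - real m" using mN by simp
    have "(real N - real j) * (al + be * real m) + (real j - real m) * (al + be * real N)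
          = (al + be * real j) * (real N - real m)" by (simp add: algebra_simps)
    then have "al + be * real j = ((real N - real j) * (al + be * real m) + (real j - real m) * (al + be * real N))
          / (real N - real m)" using pos by (simp add: eq_divide_eq)
    then have "\<exists>x1 x2. 0 \<le> x1 \<and> x1 < real j \<and> real j < x2 \<and> x2 \<le> real N \<and>
            NP v P x1 \<noteq> \<infinity> \<and> NP v P x2 \<noteq> \<infinity> \<and>
            real_of_ereal (NP v P (real j)) =
              ((x2 - real j) * real_of_ereal (NP v P x1) + (real j - x1) * real_of_ereal (NP v P x2))
                / (x2 - x1)"
      using that e1 e2 e3 by (intro exI[of _ "real m"] exI[of _ "real N"]) auto
    then show False using bj unfolding breakpoint_def N_def by blast
  qed
  have mmax: "m_max v P = m"
    unfolding m_max_def N_def[symmetric]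
  proof (rule Greatest_equality)
    show "m < N \<and> breakpoint v P (real m)" using mN bm by simp
    show "y \<le> m" if "y < N \<and> breakpoint v P (real y)" for y
      using nb[of y] that by (meson not_le)
  qed
  have smax: "s_max v P = sg"
  proof -
    have pos: "(0::rat) < of_nat N - of_nat m" using mN by auto
    have "w N - w m = sg * (of_nat N - of_nat m)" using eqm by (simp add: Lq_def algebra_simps)
    then show ?thesis using pos mN
      by (simp add: s_max_def mmax N_def[symmetric] w_def[symmetric] a_def[symmetric] of_nat_diff)
  qed
  show ?thesis
    using mN am geq gt eqm unfolding mmax smax N_def[symmetric] a_def[symmetric] w_def[symmetric] Lq_def
    by auto
qed




lemma rat_real_le:
  assumes "(x::rat) + s * (of_nat j - of_nat k) \<le> y"
  shows "real_of_rat x + real_of_rat s * (real j - real k) \<le> real_of_rat y"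
proof -
  have "real_of_rat (x + s * (of_nat j - of_nat k)) \<le> real_of_rat y"
    using assms by (simp only: of_rat_less_eq)
  then show ?thesis by (simp add: of_rat_add of_rat_mult of_rat_diff)
qed

lemma sum_rev_atMost: "(\<Sum>i\<le>(n::nat). f i) = (\<Sum>i\<le>n. f (n - i))"
  by (rule sum.reindex_bij_witness[of _ "\<lambda>i. n - i" "\<lambda>i. n - i"]) (auto simp: diff_diff_cancel)

lemma order_shift_coeffs:
  fixes R :: "'k::field poly"
  assumes "R \<noteq> 0"
  shows "(\<forall>l < order c R. coeff (pcompose R [:c,1:]) l = 0) \<and> coeff (pcompose R [:c,1:]) (order c R) \<noteq> 0"
proof -
  define q where "q = order c R"
  have sh: "pcompose [:-c, 1:] [:c, 1:] = [:0, 1:]" by (simp add: pcompose_pCons)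
  have sh2: "pcompose [:c, 1:] [:-c, 1:] = [:0, 1:]" by (simp add: pcompose_pCons)
  obtain g where g: "R = [:-c,1:]^q * g" using order_1[of c R] by (auto simp: q_def elim: dvdE)
  have Rc: "pcompose R [:c,1:] = monom 1 q * pcompose g [:c,1:]"
    by (simp add: g pcompose_mult pcompose_power_left sh monom_altdef)
  have low: "\<forall>l<q. coeff (pcompose R [:c,1:]) l = 0"
    by (simp add: Rc coeff_monom_mult)
  have "coeff (pcompose R [:c,1:]) q \<noteq> 0"
  proof
    assume "coeff (pcompose R [:c,1:]) q = 0"
    then have "poly (pcompose g [:c,1:]) 0 = 0" by (simp add: Rc coeff_monom_mult poly_0_coeff_0)
    then have "[:0, 1:] dvd pcompose g [:c,1:]" using dvd_iff_poly_eq_0[of 0 "pcompose g [:c,1:]"] by (metis minus_zero)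
    then obtain h where h: "pcompose g [:c,1:] = [:0,1:] * h" by (elim dvdE)
    have "R = pcompose (pcompose R [:c,1:]) [:-c,1:]"
      by (simp add: pcompose_assoc[symmetric] sh2)
    also have "pcompose R [:c,1:] = [:0,1:] ^ Suc q * h"
      by (simp add: Rc h monom_altdef)
    also have "pcompose ([:0,1:] ^ Suc q * h) [:-c,1:] = [:-c,1:] ^ Suc q * pcompose h [:-c,1:]"
      by (simp only: pcompose_mult pcompose_power_left) (simp add: pcompose_pCons)
    finally have "[:-c,1:] ^ Suc q dvd R" by (metis dvd_triv_left)
    then show False using order_2[OF assms, of c] by (simp add: q_def)
  qed
  then show ?thesis using low by (simp add: q_def)
qed

context malcev_neumann begin

lemma main:
  fixes P :: "'a poly" and c :: 'k and q :: nat
  assumes deg: "degree P > 0"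
    and a0: "pc P 0 \<noteq> 0"
    and aN: "pc P (degree P) \<noteq> 0"
    and root: "poly (res_poly v C P) c = 0"
    and mult: "q = order c (res_poly v C P)"
  shows "breakpoint v (pcompose P [:teich c * pw (s_max v P), 1:]) (real (degree P - q))
       \<and> (\<forall>x. 0 \<le> x \<and> x \<le> real (degree P - q) \<longrightarrow>
             NP v (pcompose P [:teich c * pw (s_max v P), 1:]) x = NP v P x)
       \<and> (\<forall>x y. real (degree P - q) \<le> x \<and> x < y \<and> y \<le> real (degree P) \<and>
             NP v (pcompose P [:teich c * pw (s_max v P), 1:]) x \<noteq> \<infinity> \<longrightarrow>
             NP v (pcompose P [:teich c * pw (s_max v P), 1:]) y >
             NP v (pcompose P [:teich c * pw (s_max v P), 1:]) x
               + ereal (real_of_rat (s_max v P) * (y - x)))"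
proof -
  define N where "N = degree P"
  define a where "a k = pc P k" for k
  define w where "w k = v (a k)" for k
  define m where "m = m_max v P"
  define s where "s = s_max v P"
  define Lq where "Lq k = w N + s * (of_nat k - of_nat N)" for k :: nat
  have LS: "m < N \<and> a m \<noteq> 0 \<and> (\<forall>k\<le>N. a k \<noteq> 0 \<longrightarrow> Lq k \<le> w k) \<and>
      (\<forall>k<m. a k \<noteq> 0 \<longrightarrow> Lq k < w k) \<and> Lq m = w m"
    using last_segment[OF deg a0 aN, of v]
    unfolding N_def[symmetric] a_def[symmetric] w_def[symmetric] m_def[symmetric] s_def[symmetric] Lq_def
    by blast
  then have mN: "m < N" and am: "a m \<noteq> 0" and geq: "\<And>k. k \<le> N \<Longrightarrow> a k \<noteq> 0 \<Longrightarrow> Lq k \<le> w k"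
    and gtm: "\<And>k. k < m \<Longrightarrow> a k \<noteq> 0 \<Longrightarrow> Lq k < w k" and eqm: "Lq m = w m" by auto
  have LqS: "Lq j = Lq k + s * (of_nat j - of_nat k)" for j k
    by (simp add: Lq_def algebra_simps)
  have LqN: "Lq N = w N" by (simp add: Lq_def)
  have aN': "a N \<noteq> 0" using aN by (simp add: a_def N_def)
  have a0': "a 0 \<noteq> 0" using a0 by (simp add: a_def)
  define R where "R = res_poly v C P"
  define al where "al k = C (a k) (Lq k)" for k
  have al_low: "al k = 0" if "k < m" for k
  proof (cases "a k = 0")
    case True then show ?thesis by (simp add: al_def C_zero)
  next
    case False
    then show ?thesis using gtm[OF that False] v_def[OF False] by (simp add: al_def w_def)
  qed
  have coeffR: "coeff R i = (if i \<le> N - m then al (N - i) else 0)" for i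
  proof -
    have "coeff R i = (\<Sum>k\<le>N - m. if k = i then C (a (N - k)) (w m + s * of_nat (N - m - k)) else 0)"
      unfolding R_def res_poly_def Let_def N_def[symmetric] m_def[symmetric] s_def[symmetric]
      by (simp add: coeff_sum coeff_monom a_def w_def)
    also have "\<dots> = (if i \<le> N - m then C (a (N - i)) (w m + s * of_nat (N - m - i)) else 0)"
      by (simp add: sum.delta)
    also have "\<dots> = (if i \<le> N - m then al (N - i) else 0)"
    proof (cases "i \<le> N - m")
      case True
      then have "w m + s * of_nat (N - m - i) = Lq (N - i)"
        using mN eqm[symmetric] by (simp add: Lq_def of_nat_diff algebra_simps)
      then show ?thesis using True by (simp add: al_def)
    qed simp
    finally show ?thesis .
  qed
  have coeffR': "coeff R i = al (N - i)" if "i \<le> N" for i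
    using that al_low[of "N - i"] by (auto simp: coeffR)
  have R0: "coeff R 0 \<noteq> 0"
    using v_def[OF aN'] by (simp add: coeffR al_def LqN w_def)
  have Rnz: "R \<noteq> 0" using R0 by auto
  have degR: "degree R \<le> N - m" by (rule degree_le) (simp add: coeffR)
  have q1: "1 \<le> q" using root Rnz order_root[of R c] by (simp add: mult R_def)
  have qle: "q \<le> N - m" using order_degree[OF Rnz, of c] degR by (simp add: mult R_def)
  define Rc where "Rc = pcompose R [:c,1:]"
  have Rc_coeff: "coeff Rc l = (\<Sum>k\<le>N. al k * of_nat ((N - k) choose l) * c ^ ((N - k) - l))" for l
  proof -
    have "coeff Rc l = (\<Sum>i\<le>N. coeff R i * of_nat (i choose l) * c ^ (i - l))"
      unfolding Rc_def using degR by (intro coeff_pcompose_shift) simp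
    also have "\<dots> = (\<Sum>i\<le>N. al (N - i) * of_nat (i choose l) * c ^ (i - l))"
      by (intro sum.cong) (auto simp: coeffR')
    also have "\<dots> = (\<Sum>k\<le>N. al k * of_nat ((N - k) choose l) * c ^ ((N - k) - l))"
      by (subst sum_rev_atMost) (intro sum.cong, auto simp: diff_diff_cancel)
    finally show ?thesis .
  qed
  have Rc_facts: "(\<forall>l<q. coeff Rc l = 0) \<and> coeff Rc q \<noteq> 0"
    using order_shift_coeffs[OF Rnz, of c] by (simp add: Rc_def mult R_def)
  have Rc_low: "\<And>l. l < q \<Longrightarrow> coeff Rc l = 0" and Rc_q: "coeff Rc q \<noteq> 0" using Rc_facts by auto
  define t where "t = teich c * pw s"
  define Pc where "Pc = pcompose P [:t,1:]"
  have degPc: "degree Pc = N" by (simp add: Pc_def degree_pcompose N_def)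
  define b where "b j = pc Pc j" for j
  define tm where "tm j k = a k * of_nat ((N - k) choose (N - j)) * t ^ ((N - k) - (N - j))" for j k
  have b_sum: "b j = (\<Sum>k\<le>N. tm j k)" for j
  proof -
    have "b j = coeff Pc (N - j)" by (simp add: b_def pc_def degPc)
    also have "\<dots> = (\<Sum>i\<le>N. coeff P i * of_nat (i choose (N - j)) * t ^ (i - (N - j)))"
      unfolding Pc_def by (intro coeff_pcompose_shift) (simp add: N_def)
    also have "\<dots> = (\<Sum>k\<le>N. tm j k)"
      by (subst sum_rev_atMost) (intro sum.cong, auto simp: tm_def a_def pc_def N_def)
    finally show ?thesis .
  qed
  have tm_zero: "tm j k = 0" if "j < k" "k \<le> N" for j k
    using that by (simp add: tm_def binomial_eq_0)
  have tm_zero': "tm j k = 0" if "a k = 0" for j k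
    using that by (simp add: tm_def)
  have a_lev: "lev y (a k)" if "a k \<noteq> 0 \<Longrightarrow> y \<le> w k" for y k
    using that lev_zero lev_mono[OF lev_v] by (cases "a k = 0") (auto simp: w_def)
  have tm_lev: "lev (y + (of_nat j - of_nat k) * s) (tm j k) \<and>
      C (tm j k) (y + (of_nat j - of_nat k) * s) = C (a k) y * of_nat ((N - k) choose (N - j)) * c ^ (j - k)"
    if "k \<le> j" "j \<le> N" "lev y (a k)" for y j k
  proof -
    have e: "(N - k) - (N - j) = j - k" using that by simp
    note l1 = lev_mult[OF that(3) conjunct1[OF lev_nat[of "(N - k) choose (N - j)"]]]
    note l2 = lev_mult[OF conjunct1[OF l1] conjunct1[OF lev_tpow[of "j - k" s c]]]
    have e2: "(of_nat j - of_nat k) * s = of_nat (j - k) * s" using that by (simp add: of_nat_diff)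
    have e3: "tm j k = a k * of_nat ((N - k) choose (N - j)) * (teich c * pw s) ^ (j - k)"
      by (simp only: tm_def e t_def)
    show ?thesis unfolding e2 e3 using l1 l2 lev_nat[of "(N - k) choose (N - j)"] lev_tpow[of "j - k" s c]
      by simp
  qed
  have k0ex: "\<exists>k0\<le>j. a k0 \<noteq> 0 \<and> (\<forall>k\<le>j. a k \<noteq> 0 \<longrightarrow> w k0 - of_nat k0 * s \<le> w k - of_nat k * s)
      \<and> (\<forall>k<k0. a k \<noteq> 0 \<longrightarrow> w k0 - of_nat k0 * s < w k - of_nat k * s)" for j
  proof -
    have "finite {k. k \<le> j \<and> a k \<noteq> 0}" "{k. k \<le> j \<and> a k \<noteq> 0} \<noteq> {}" using a0' by auto
    from finite_min_least[OF this, of "\<lambda>k. w k - of_nat k * s"] obtain k0 where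
      "k0 \<in> {k. k \<le> j \<and> a k \<noteq> 0}"
      "\<forall>k'\<in>{k. k \<le> j \<and> a k \<noteq> 0}. w k0 - of_nat k0 * s \<le> w k' - of_nat k' * s"
      "\<forall>k'\<in>{k. k \<le> j \<and> a k \<noteq> 0}. k' < k0 \<longrightarrow> w k0 - of_nat k0 * s < w k' - of_nat k' * s"
      by blast
    then show ?thesis by (intro exI[of _ k0]) auto
  qed
  have b_lev: "lev (w k0 + (of_nat j - of_nat k0) * s) (b j)"
    if hj: "j \<le> N" "k0 \<le> j" "\<And>k. k \<le> j \<Longrightarrow> a k \<noteq> 0 \<Longrightarrow> w k0 - of_nat k0 * s \<le> w k - of_nat k * s" for j k0
  proof -
    have "lev (w k0 + (of_nat j - of_nat k0) * s) (tm j k)" if k: "k \<le> N" for k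
    proof (cases "j < k \<or> a k = 0")
      case True
      then have "tm j k = 0" using tm_zero tm_zero' k by blast
      then show ?thesis by (simp add: lev_zero)
    next
      case False
      then have kj: "k \<le> j" and ak: "a k \<noteq> 0" by auto
      have "lev (w k + (of_nat j - of_nat k) * s) (tm j k)"
        using tm_lev[OF kj \<open>j \<le> N\<close> lev_v[OF ak]] by (simp add: w_def)
      moreover have "w k0 + (of_nat j - of_nat k0) * s \<le> w k + (of_nat j - of_nat k) * s"
        using hj(3)[OF kj ak] by (simp add: algebra_simps)
      ultimately show ?thesis by (rule lev_mono)
    qed
    then show ?thesis using lev_sum[of "{..N}" "w k0 + (of_nat j - of_nat k0) * s" "tm j"]
      by (simp add: b_sum)
  qed
  have good: "b k0 \<noteq> 0 \<and> v (b k0) = w k0"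
    if hk: "k0 \<le> N" "a k0 \<noteq> 0" "\<And>k. k < k0 \<Longrightarrow> a k \<noteq> 0 \<Longrightarrow> w k0 - of_nat k0 * s < w k - of_nat k * s" for k0
  proof -
    have T: "lev (w k0) (tm k0 k) \<and> C (tm k0 k) (w k0) = (if k = k0 then C (a k0) (w k0) else 0)"
      if k: "k \<le> N" for k
    proof (cases "k0 < k \<or> a k = 0")
      case True
      then have "tm k0 k = 0" using tm_zero tm_zero' k by blast
      then show ?thesis using True \<open>a k0 \<noteq> 0\<close> by (auto simp: lev_zero C_zero)
    next
      case False
      then have kj: "k \<le> k0" and ak: "a k \<noteq> 0" by auto
      show ?thesis
      proof (cases "k = k0")
        case True
        have "tm k0 k0 = a k0" by (simp add: tm_def)
        then show ?thesis using True lev_v[OF ak] by (simp add: w_def)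
      next
        case False
        then have kk: "k < k0" using kj by simp
        have l: "lev (w k + (of_nat k0 - of_nat k) * s) (tm k0 k)"
          using tm_lev[OF kj \<open>k0 \<le> N\<close> lev_v[OF ak]] by (simp add: w_def)
        have lt: "w k0 < w k + (of_nat k0 - of_nat k) * s"
          using hk(3)[OF kk ak] by (simp add: algebra_simps)
        show ?thesis using lev_mono[OF l less_imp_le[OF lt]] lev_gt_C[OF l lt] False by simp
      qed
    qed
    have "lev (w k0) (b k0) \<and> C (b k0) (w k0) = (\<Sum>k\<le>N. C (tm k0 k) (w k0))"
      using lev_sum[of "{..N}" "w k0" "tm k0"] T by (simp add: b_sum)
    moreover have "(\<Sum>k\<le>N. C (tm k0 k) (w k0)) = C (a k0) (w k0)"
      using T hk(1) by (simp add: sum.delta)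
    moreover have "C (a k0) (w k0) \<noteq> 0" using v_def[OF hk(2)] by (simp add: w_def)
    ultimately show ?thesis using lev_v_eq[of "w k0" "b k0"] by simp
  qed
  have b_res: "lev (Lq j) (b j) \<and> C (b j) (Lq j) = coeff Rc (N - j)" if "m \<le> j" "j \<le> N" for j
  proof -
    have T: "lev (Lq j) (tm j k) \<and>
        C (tm j k) (Lq j) = al k * of_nat ((N - k) choose (N - j)) * c ^ ((N - k) - (N - j))"
      if k: "k \<le> N" for k
    proof (cases "j < k")
      case True
      then have "tm j k = 0" using tm_zero k by blast
      moreover have "(N - k) choose (N - j) = 0" using True k by (simp add: binomial_eq_0)
      ultimately show ?thesis by (simp only: lev_zero C_zero of_nat_0 mult_zero_left mult_zero_right)
    next
      case False
      then have kj: "k \<le> j" by simp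
      have la: "lev (Lq k) (a k)" using geq[OF k] by (intro a_lev) simp
      have "(N - k) - (N - j) = j - k" using kj \<open>j \<le> N\<close> by simp
      moreover have "Lq k + (of_nat j - of_nat k) * s = Lq j" by (simp add: LqS[of j k] algebra_simps)
      ultimately show ?thesis using tm_lev[OF kj \<open>j \<le> N\<close> la] by (simp add: al_def)
    qed
    have "lev (Lq j) (b j) \<and> C (b j) (Lq j) = (\<Sum>k\<le>N. C (tm j k) (Lq j))"
      using lev_sum[of "{..N}" "Lq j" "tm j"] T by (simp add: b_sum)
    then show ?thesis using T by (simp add: Rc_coeff)
  qed
  have F1: "Lq j \<le> v (b j)" if "j \<le> N" "b j \<noteq> 0" for j
  proof -
    obtain k0 where k0: "k0 \<le> j" "a k0 \<noteq> 0" "\<And>k. k \<le> j \<Longrightarrow> a k \<noteq> 0 \<Longrightarrow> w k0 - of_nat k0 * s \<le> w k - of_nat k * s"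
      using k0ex[of j] by blast
    have "w k0 + (of_nat j - of_nat k0) * s \<le> v (b j)"
      using lev_le_v[OF that(2) b_lev[OF that(1) k0(1) k0(3)]] .
    moreover have "Lq k0 \<le> w k0" using geq k0 that by simp
    ultimately show ?thesis by (simp add: LqS[of j k0] algebra_simps)
  qed
  have mq: "m \<le> N - q" using qle mN by simp
  have F2: "b (N - q) \<noteq> 0 \<and> v (b (N - q)) = Lq (N - q)"
  proof -
    have "N - (N - q) = q" using qle mN by simp
    then have "lev (Lq (N - q)) (b (N - q))" "C (b (N - q)) (Lq (N - q)) \<noteq> 0"
      using b_res[OF mq] Rc_q by auto
    then show ?thesis using lev_v_eq by blast
  qed
  have F3: "Lq j < v (b j)" if "N - q < j" "j \<le> N" "b j \<noteq> 0" for j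
  proof -
    have "m \<le> j" using mq that by simp
    moreover have "N - j < q" using that by simp
    ultimately show ?thesis using b_res[of j] Rc_low[of "N - j"] lev_gt that by auto
  qed
  define S where "S = np_points v P"
  define Sc where "Sc = np_points v Pc"
  define alpha where "alpha = real_of_rat (w N) - real_of_rat s * real N"
  define beta where "beta = real_of_rat s"
  have lineq: "alpha + beta * real k = real_of_rat (Lq k)" for k
    by (simp add: alpha_def beta_def Lq_def of_rat_add of_rat_mult of_rat_diff algebra_simps)
  have S_eq: "S = {(real k, real_of_rat (w k)) | k. k \<le> N \<and> a k \<noteq> 0}"
    by (simp add: S_def np_points_def N_def a_def w_def)
  have Sc_eq: "Sc = {(real j, real_of_rat (v (b j))) | j. j \<le> N \<and> b j \<noteq> 0}"
    by (simp add: Sc_def np_points_def degPc b_def)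
  have finS: "finite S" unfolding S_eq by (rule finite_image_set) simp
  have finSc: "finite Sc" unfolding Sc_eq by (rule finite_image_set) simp
  have Sc_ge: "alpha + beta * x \<le> y" if "(x, y) \<in> Sc" for x y
    using that F1 by (auto simp: Sc_eq lineq of_rat_less_eq)
  have Sc_gt: "alpha + beta * x < y" if hxy: "(x, y) \<in> Sc" "0 < 1 * x + - real (N - q)" for x y
  proof -
    obtain j where j: "x = real j" "y = real_of_rat (v (b j))" "j \<le> N" "b j \<noteq> 0"
      using hxy(1) by (auto simp: Sc_eq)
    have "N - q < j" using hxy(2) j(1) by simp
    then show ?thesis using F3[OF _ j(3,4)] j by (simp add: lineq of_rat_less)
  qed
  have pq: "(real (N - q), alpha + beta * real (N - q)) \<in> Sc"
    using F2 by (auto simp: Sc_eq lineq)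
  have NPc: "NP v Pc x = nps Sc x" for x by (simp add: NP_nps Sc_def)
  have NPP: "NP v P x = nps S x" for x by (simp add: NP_nps S_def)
  have NPq: "nps Sc (real (N - q)) = ereal (alpha + beta * real (N - q))"
    by (rule nps_on_line[OF pq pq _ _ Sc_ge]) auto
  have qN: "real (N - q) < real N" using q1 mN by simp
  have eN: "alpha + beta * real N = real_of_rat (w N)" using lineq[of N] LqN by simp
  have ptN: "(real N, alpha + beta * real N) \<in> S"
    using aN' by (auto simp: S_eq lineq LqN)
  have cl2a: "nps S x \<le> nps Sc x" for x
  proof (rule nps_mono)
    fix k w' assume "(k, w') \<in> Sc"
    then obtain j where j: "k = real j" "w' = real_of_rat (v (b j))" "j \<le> N" "b j \<noteq> 0"
      by (auto simp: Sc_eq)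
    obtain k0 where k0: "k0 \<le> j" "a k0 \<noteq> 0" "\<And>k. k \<le> j \<Longrightarrow> a k \<noteq> 0 \<Longrightarrow> w k0 - of_nat k0 * s \<le> w k - of_nat k * s"
      using k0ex[of j] by blast
    have p0: "(real k0, real_of_rat (w k0)) \<in> S" using k0 j by (auto simp: S_eq)
    have "w N \<le> w k0 + s * (of_nat N - of_nat k0)"
      using geq[of k0] k0 j by (simp add: Lq_def algebra_simps)
    then have "real_of_rat (w N) \<le> real_of_rat (w k0 + s * (of_nat N - of_nat k0))"
      by (simp only: of_rat_less_eq)
    then have i1: "alpha + beta * real N \<le> real_of_rat (w k0) + beta * (real N - real k0)"
      unfolding eN by (simp add: beta_def of_rat_add of_rat_mult of_rat_diff)
    have "w k0 + (of_nat j - of_nat k0) * s \<le> v (b j)"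
      using lev_le_v[OF j(4) b_lev[OF j(3) k0(1) k0(3)]] .
    then have i2: "real_of_rat (w k0) + beta * (real j - real k0) \<le> w'"
      unfolding j beta_def by (intro rat_real_le) (simp add: mult.commute)
    show "\<exists>y0\<le>w'. (k, y0) \<in> convex hull S"
      unfolding j(1) by (rule seg_E[OF p0 ptN _ _ i1 i2]) (use k0 j in auto)
  qed
  define T where "T = insert (real N, alpha + beta * real N) Sc"
  have cl2b: "nps T x = nps Sc x" if "x \<le> real (N - q)" for x
    unfolding T_def by (rule nps_drop_right[OF finSc pq Sc_ge qN that])
  have cl2c: "nps T x \<le> nps S x" for x
  proof (rule nps_mono)
    fix k w' assume "(k, w') \<in> S"
    then obtain j where j: "k = real j" "w' = real_of_rat (w j)" "j \<le> N" "a j \<noteq> 0"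
      by (auto simp: S_eq)
    obtain k0 where k0: "k0 \<le> j" "a k0 \<noteq> 0" "\<And>k. k \<le> j \<Longrightarrow> a k \<noteq> 0 \<Longrightarrow> w k0 - of_nat k0 * s \<le> w k - of_nat k * s"
      "\<And>k. k < k0 \<Longrightarrow> a k \<noteq> 0 \<Longrightarrow> w k0 - of_nat k0 * s < w k - of_nat k * s"
      using k0ex[of j] by blast
    have gk: "b k0 \<noteq> 0 \<and> v (b k0) = w k0" using good[of k0] k0 j by simp
    have p0: "(real k0, real_of_rat (w k0)) \<in> T" using gk k0 j by (auto simp: T_def Sc_eq)
    have pN: "(real N, alpha + beta * real N) \<in> T" by (simp add: T_def)
    have "w N \<le> w k0 + s * (of_nat N - of_nat k0)"
      using geq[of k0] k0 j by (simp add: Lq_def algebra_simps)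
    then have "real_of_rat (w N) \<le> real_of_rat (w k0 + s * (of_nat N - of_nat k0))"
      by (simp only: of_rat_less_eq)
    then have i1: "alpha + beta * real N \<le> real_of_rat (w k0) + beta * (real N - real k0)"
      unfolding eN by (simp add: beta_def of_rat_add of_rat_mult of_rat_diff)
    have "w k0 + s * (of_nat j - of_nat k0) \<le> w j"
      using k0(3)[of j] j by (simp add: algebra_simps)
    then have i2: "real_of_rat (w k0) + beta * (real j - real k0) \<le> w'"
      unfolding j beta_def by (rule rat_real_le)
    show "\<exists>y0\<le>w'. (k, y0) \<in> convex hull T"
      unfolding j(1) by (rule seg_E[OF p0 pN _ _ i1 i2]) (use k0 j in auto)
  qed
  have claim2: "NP v Pc x = NP v P x" if "x \<le> real (N - q)" for x
    using cl2a[of x] cl2b[OF that] cl2c[of x] unfolding NPc NPP by simp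
  have NPq': "NP v Pc (real (N - q)) = ereal (alpha + beta * real (N - q))" using NPq by (simp add: NPc)
  have bp: "breakpoint v Pc (real (N - q))"
    unfolding breakpoint_def degPc
  proof (intro conjI)
    show "0 \<le> real (N - q)" by simp
    show "real (N - q) \<le> real N" by simp
    show "NP v Pc (real (N - q)) \<noteq> \<infinity>" using NPq' by simp
  next
    show "\<not> (\<exists>x1 x2. 0 \<le> x1 \<and> x1 < real (N - q) \<and> real (N - q) < x2 \<and> x2 \<le> real N \<and>
            NP v Pc x1 \<noteq> \<infinity> \<and> NP v Pc x2 \<noteq> \<infinity> \<and>
            real_of_ereal (NP v Pc (real (N - q))) =
              ((x2 - real (N - q)) * real_of_ereal (NP v Pc x1) + (real (N - q) - x1) * real_of_ereal (NP v Pc x2))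
                / (x2 - x1))"
    proof
      assume "\<exists>x1 x2. 0 \<le> x1 \<and> x1 < real (N - q) \<and> real (N - q) < x2 \<and> x2 \<le> real N \<and>
            NP v Pc x1 \<noteq> \<infinity> \<and> NP v Pc x2 \<noteq> \<infinity> \<and>
            real_of_ereal (NP v Pc (real (N - q))) =
              ((x2 - real (N - q)) * real_of_ereal (NP v Pc x1) + (real (N - q) - x1) * real_of_ereal (NP v Pc x2))
                / (x2 - x1)"
      then obtain x1 x2 where x: "x1 < real (N - q)" "real (N - q) < x2" "NP v Pc x1 \<noteq> \<infinity>" "NP v Pc x2 \<noteq> \<infinity>"
        "real_of_ereal (NP v Pc (real (N - q))) =
              ((x2 - real (N - q)) * real_of_ereal (NP v Pc x1) + (real (N - q) - x1) * real_of_ereal (NP v Pc x2))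
                / (x2 - x1)" by blast
      have "ereal (alpha + beta * x1) \<le> NP v Pc x1"
        unfolding NPc by (rule nps_ge_line) (rule Sc_ge)
      then have r1: "alpha + beta * x1 \<le> real_of_ereal (NP v Pc x1)" using ereal_fin_ge[OF x(3)] by simp
      have "ereal (alpha + beta * x2) < NP v Pc x2"
        unfolding NPc
      proof (rule nps_strict[OF finSc Sc_ge Sc_gt])
        show "0 < 1 * x2 + - real (N - q)" using x(2) by simp
      qed
      then have r2: "alpha + beta * x2 < real_of_ereal (NP v Pc x2)" using ereal_fin_gt[OF x(4)] by simp
      have "alpha + beta * real (N - q) < ((x2 - real (N - q)) * real_of_ereal (NP v Pc x1)
          + (real (N - q) - x1) * real_of_ereal (NP v Pc x2)) / (x2 - x1)"
        by (rule interp_gt[OF x(1,2) r1 less_imp_le[OF r2] disjI2[OF r2]])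
      moreover have "real_of_ereal (NP v Pc (real (N - q))) = alpha + beta * real (N - q)"
        using NPq' by simp
      ultimately show False using x(5) by linarith
    qed
  qed
  have cl3: "NP v Pc y > NP v Pc x + ereal (beta * (y - x))"
    if hx: "real (N - q) \<le> x" "x < y" "y \<le> real N" "NP v Pc x \<noteq> \<infinity>" for x y
  proof -
    have gy: "ereal (alpha + beta * y) < nps Sc y"
    proof (rule nps_strict[OF finSc Sc_ge Sc_gt])
      show "0 < 1 * y + - real (N - q)" using hx by simp
    qed
    have "ereal (alpha + beta * x) \<le> nps Sc x" by (rule nps_ge_line) (rule Sc_ge)
    moreover have "nps Sc x \<noteq> \<infinity>" using hx(4) NPc by simp
    ultimately have "nps Sc x = ereal (real_of_ereal (nps Sc x)) \<and> alpha + beta * x \<le> real_of_ereal (nps Sc x)"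
      using ereal_fin_ge by blast
    then obtain rx where rx: "nps Sc x = ereal rx" "alpha + beta * x \<le> rx" by blast
    show ?thesis
    proof (cases "nps Sc y = \<infinity>")
      case True
      then show ?thesis by (simp add: NPc rx)
    next
      case False
      then obtain ry where ry: "(y, ry) \<in> convex hull Sc" "nps Sc y = ereal ry"
        using nps_attained[OF finSc] by blast
      have ryg: "alpha + beta * y < ry" using gy ry by simp
      have "rx + beta * (y - x) < ry"
      proof (cases "x = real (N - q)")
        case True
        then have "rx = alpha + beta * x" using NPq rx by simp
        then show ?thesis using ryg by (simp add: algebra_simps)
      next
        case False
        define x0 where "x0 = real (N - q)"
        have x0x: "x0 < x" using False hx(1) by (simp add: x0_def)
        define mu where "mu = (y - x) / (y - x0)"
        have pos: "0 < y - x0" using x0x hx by simp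
        have mu: "0 < mu" "mu \<le> 1" using x0x hx pos by (auto simp: mu_def field_simps)
        have mux: "mu * (y - x0) = y - x" using pos by (simp add: mu_def)
        have "mu *\<^sub>R (x0, alpha + beta * x0) + (1 - mu) *\<^sub>R (y, ry) \<in> convex hull Sc"
          using mu ry(1) pq by (intro convexD[OF convex_convex_hull]) (auto intro: hull_inc simp: x0_def)
        moreover have "mu * x0 + (1 - mu) * y = x" using mux by (simp add: algebra_simps)
        ultimately have "(x, mu * (alpha + beta * x0) + (1 - mu) * ry) \<in> convex hull Sc" by simp
        then have "nps Sc x \<le> ereal (mu * (alpha + beta * x0) + (1 - mu) * ry)" by (rule nps_le)
        then have rxle: "rx \<le> mu * (alpha + beta * x0) + (1 - mu) * ry" using rx by simp
        have "mu * (alpha + beta * x0) + beta * (y - x) = mu * (alpha + beta * y)"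
        proof -
          have "beta * (y - x) = beta * (mu * (y - x0))" using mux by simp
          then show ?thesis by (simp add: algebra_simps)
        qed
        moreover have "mu * (alpha + beta * y) < mu * ry" using mu ryg by simp
        ultimately show ?thesis using rxle by (simp add: algebra_simps)
      qed
      then show ?thesis using rx ry by (simp add: NPc)
    qed
  qed
  have ePc: "pcompose P [:teich c * pw (s_max v P), 1:] = Pc" by (simp add: Pc_def t_def s_def)
  have eb: "real_of_rat (s_max v P) = beta" by (simp add: beta_def s_def)
  show ?thesis
    unfolding ePc eb N_def[symmetric]
  proof (intro conjI allI impI)
    show "breakpoint v Pc (real (N - q))" by (rule bp)
  next
    fix x assume "0 \<le> x \<and> x \<le> real (N - q)"
    then show "NP v Pc x = NP v P x" using claim2 by blast
  next
    fix x y assume h: "real (N - q) \<le> x \<and> x < y \<and> y \<le> real N \<and> NP v Pc x \<noteq> \<infinity>"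
    show "NP v Pc x + ereal (beta * (y - x)) < NP v Pc y"
      using cl3[of x y] h by (elim conjE) simp
  qed
qed

end


theorem proposition2p6:
  fixes p :: nat
    and v :: "'a::field_char_0 \<Rightarrow> rat"
    and teich :: "'k::field \<Rightarrow> 'a"
    and pw :: "rat \<Rightarrow> 'a"
    and C :: "'a \<Rightarrow> rat \<Rightarrow> 'k"
    and P :: "'a poly" and c :: 'k and q :: nat
  assumes L: "malcev_neumann p v teich pw C"
    and deg: "degree P > 0"
    and a0: "pc P 0 \<noteq> 0"
    and aN: "pc P (degree P) \<noteq> 0"
    and root: "poly (res_poly v C P) c = 0"
    and mult: "q = order c (res_poly v C P)"
  shows "breakpoint v (pcompose P [:teich c * pw (s_max v P), 1:]) (real (degree P - q))
       \<and> (\<forall>x. 0 \<le> x \<and> x \<le> real (degree P - q) \<longrightarrow>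
             NP v (pcompose P [:teich c * pw (s_max v P), 1:]) x = NP v P x)
       \<and> (\<forall>x y. real (degree P - q) \<le> x \<and> x < y \<and> y \<le> real (degree P) \<and>
             NP v (pcompose P [:teich c * pw (s_max v P), 1:]) x \<noteq> \<infinity> \<longrightarrow>
             NP v (pcompose P [:teich c * pw (s_max v P), 1:]) y >
             NP v (pcompose P [:teich c * pw (s_max v P), 1:]) x
               + ereal (real_of_rat (s_max v P) * (y - x)))"
proof -
  interpret malcev_neumann p v teich pw C by (rule L)
  show ?thesis by (rule main[OF deg a0 aN root mult])
qed

end
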